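(* Let $s \geq 1$, $\Gamma = (\gamma_1, \ldots, \gamma_s), \alpha = (\alpha_1, \ldots, \alpha_s) \in \mathbb{Z}^s$, and $u \in \mathbb{Z}_{\geq 0}$. For any fixed $\Pi \subset [s]$ with $|\Pi| > u$, \[ \sum_{\substack{\sigma \in \mathfrak{S}_s \\ M \subset \Pi}} (-1)^{|M|} \operatorname{sgn}(\sigma)\, \Delta_s(\sigma \cdot^\alpha \Gamma - 1_M)\, |M|^u = 0. \]
   Context: For $\sigma \in \mathfrak{S}_s$ and $\Gamma \in \mathbb{Z}^s$, $\sigma \cdot \Gamma = (\gamma_{\sigma^{-1}(1)}, \ldots, \gamma_{\sigma^{-1}(s)})$, and $\sigma \cdot^\alpha \Gamma = \sigma \cdot (\Gamma + \alpha) - \alpha$, i.e. its $\ell$-th entry is $\gamma_{\sigma^{-1}(\ell)} + \alpha_{\sigma^{-1}(\ell)} - \alpha_\ell$. $\Delta_s(y_1, \ldots, y_s) = \prod_{1 \leq v < w \leq s}(y_w - y_v)$. $1_M \in \{0,1\}^s$ is the indicator vector of $M \subset [s]$. The convention $0^0 = 1$ is used. *)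

theory Defs
  imports Main "HOL-Combinatorics.Permutations"
begin

text \<open>Vectors in Z^s are functions nat => int, relevant on indices {1..s}.\<close>

definition Delta :: "nat \<Rightarrow> (nat \<Rightarrow> int) \<Rightarrow> int" where
  "Delta s y = (\<Prod>w\<in>{1..s}. \<Prod>v\<in>{1..<w}. (y w - y v))"

definition perm_act :: "(nat \<Rightarrow> nat) \<Rightarrow> (nat \<Rightarrow> int) \<Rightarrow> (nat \<Rightarrow> int)" where
  "perm_act \<sigma> \<Gamma> = (\<lambda>l. \<Gamma> (inv \<sigma> l))"

definition perm_act_shift :: "(nat \<Rightarrow> int) \<Rightarrow> (nat \<Rightarrow> nat) \<Rightarrow> (nat \<Rightarrow> int) \<Rightarrow> (nat \<Rightarrow> int)" where
  "perm_act_shift \<alpha> \<sigma> \<Gamma> = (\<lambda>l. perm_act \<sigma> (\<lambda>i. \<Gamma> i + \<alpha> i) l - \<alpha> l)"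

definition ind_vec :: "nat set \<Rightarrow> (nat \<Rightarrow> int)" where
  "ind_vec M = (\<lambda>l. if l \<in> M then 1 else 0)"

end

theory Submission
  imports Defs "HOL-Computational_Algebra.Polynomial" "HOL-Library.FuncSet"
begin


lemma alt_zero_left:
  fixes g :: "(nat \<Rightarrow> nat) \<Rightarrow> int"
  assumes S: "finite S" and ab: "a \<in> S" "b \<in> S" "a \<noteq> b"
    and g: "\<And>\<rho>. \<rho> permutes S \<Longrightarrow> g (Transposition.transpose a b \<circ> \<rho>) = g \<rho>"
  shows "(\<Sum>\<rho>\<in>{\<rho>. \<rho> permutes S}. sign \<rho> * g \<rho>) = 0"
proof -
  let ?t = "Transposition.transpose a b"
  have tp: "?t permutes S" by (rule permutes_swap_id[OF ab(1,2)])
  have tt: "\<And>\<rho>. ?t \<circ> (?t \<circ> \<rho>) = \<rho>" "\<And>\<rho>. \<rho> \<circ> ?t \<circ> ?t = \<rho>"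
    by (auto simp: fun_eq_iff)
  have "(\<Sum>\<rho>\<in>{\<rho>. \<rho> permutes S}. sign \<rho> * g \<rho>)
      = (\<Sum>\<rho>\<in>{\<rho>. \<rho> permutes S}. sign (?t \<circ> \<rho>) * g (?t \<circ> \<rho>))"
    apply (rule sum.reindex_bij_witness[where i="\<lambda>\<rho>. ?t \<circ> \<rho>" and j="\<lambda>\<rho>. ?t \<circ> \<rho>"])
    using tp by (auto simp: tt permutes_compose)
  also have "\<dots> = (\<Sum>\<rho>\<in>{\<rho>. \<rho> permutes S}. - (sign \<rho> * g \<rho>))"
  proof (rule sum.cong)
    fix \<rho> assume "\<rho> \<in> {\<rho>. \<rho> permutes S}"
    then have p: "\<rho> permutes S" by simp
    have pp: "permutation \<rho>" "permutation ?t" using S p tp permutation_permutes by blast+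
    show "sign (?t \<circ> \<rho>) * g (?t \<circ> \<rho>) = - (sign \<rho> * g \<rho>)"
      using g[OF p] ab by (simp add: sign_compose[OF pp(1) pp(2)] sign_compose[OF pp(2) pp(1)] sign_swap_id)
  qed simp
  finally show ?thesis by (simp add: sum_negf)
qed

lemma alt_zero_right:
  fixes g :: "(nat \<Rightarrow> nat) \<Rightarrow> int"
  assumes S: "finite S" and ab: "a \<in> S" "b \<in> S" "a \<noteq> b"
    and g: "\<And>\<rho>. \<rho> permutes S \<Longrightarrow> g (\<rho> \<circ> Transposition.transpose a b) = g \<rho>"
  shows "(\<Sum>\<rho>\<in>{\<rho>. \<rho> permutes S}. sign \<rho> * g \<rho>) = 0"
proof -
  let ?t = "Transposition.transpose a b"
  have tp: "?t permutes S" by (rule permutes_swap_id[OF ab(1,2)])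
  have tt: "\<And>\<rho>. ?t \<circ> (?t \<circ> \<rho>) = \<rho>" "\<And>\<rho>. \<rho> \<circ> ?t \<circ> ?t = \<rho>"
    by (auto simp: fun_eq_iff)
  have "(\<Sum>\<rho>\<in>{\<rho>. \<rho> permutes S}. sign \<rho> * g \<rho>)
      = (\<Sum>\<rho>\<in>{\<rho>. \<rho> permutes S}. sign (\<rho> \<circ> ?t) * g (\<rho> \<circ> ?t))"
    apply (rule sum.reindex_bij_witness[where i="\<lambda>\<rho>. \<rho> \<circ> ?t" and j="\<lambda>\<rho>. \<rho> \<circ> ?t"])
    using tp by (auto simp: tt permutes_compose)
  also have "\<dots> = (\<Sum>\<rho>\<in>{\<rho>. \<rho> permutes S}. - (sign \<rho> * g \<rho>))"
  proof (rule sum.cong)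
    fix \<rho> assume "\<rho> \<in> {\<rho>. \<rho> permutes S}"
    then have p: "\<rho> permutes S" by simp
    have pp: "permutation \<rho>" "permutation ?t" using S p tp permutation_permutes by blast+
    show "sign (\<rho> \<circ> ?t) * g (\<rho> \<circ> ?t) = - (sign \<rho> * g \<rho>)"
      using g[OF p] ab by (simp add: sign_compose[OF pp(1) pp(2)] sign_compose[OF pp(2) pp(1)] sign_swap_id)
  qed simp
  finally show ?thesis by (simp add: sum_negf)
qed

definition W :: "nat \<Rightarrow> (nat \<Rightarrow> int) \<Rightarrow> int" where
  "W s z = (\<Sum>\<tau>\<in>{\<tau>. \<tau> permutes {1..s}}. sign \<tau> * (\<Prod>l\<in>{1..s}. z l ^ (\<tau> l - 1)))"

lemma W_rep:
  assumes "a \<in> {1..s}" "b \<in> {1..s}" "a \<noteq> b" "z a = z b"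
  shows "W s z = 0"
  unfolding W_def
proof (rule alt_zero_right[OF _ assms(1-3)])
  fix \<rho> :: "nat \<Rightarrow> nat" assume "\<rho> permutes {1..s}"
  let ?t = "Transposition.transpose a b"
  have "(\<Prod>l\<in>{1..s}. z l ^ ((\<rho> \<circ> ?t) l - 1)) = (\<Prod>l\<in>{1..s}. z (?t l) ^ (\<rho> l - 1))"
    apply (rule prod.reindex_bij_witness[where i="?t" and j="?t"])
    using assms by (auto simp: transpose_def)
  also have "\<dots> = (\<Prod>l\<in>{1..s}. z l ^ (\<rho> l - 1))"
    using assms by (intro prod.cong) (auto simp: transpose_def)
  finally show "(\<Prod>l\<in>{1..s}. z l ^ ((\<rho> \<circ> ?t) l - 1)) = (\<Prod>l\<in>{1..s}. z l ^ (\<rho> l - 1))" .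
qed simp


lemma perm_fix_Suc:
  "{\<tau>. \<tau> permutes {1..Suc s} \<and> \<tau> (Suc s) = Suc s} = {\<tau>. \<tau> permutes {1..s}}"
proof (intro set_eqI iffI)
  fix \<tau> assume "\<tau> \<in> {\<tau>. \<tau> permutes {1..Suc s} \<and> \<tau> (Suc s) = Suc s}"
  then have p1: "\<tau> permutes {1..Suc s}" and f: "\<tau> (Suc s) = Suc s" by auto
  have "\<And>x. x \<in> {1..Suc s} - {1..s} \<Longrightarrow> \<tau> x = x"
  proof -
    fix x assume "x \<in> {1..Suc s} - {1..s}"
    then have "x = Suc s" by auto
    then show "\<tau> x = x" using f by simp
  qed
  then have "\<tau> permutes {1..s}" by (rule permutes_superset[OF p1])
  then show "\<tau> \<in> {\<tau>. \<tau> permutes {1..s}}" by simp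
next
  fix \<tau> assume "\<tau> \<in> {\<tau>. \<tau> permutes {1..s}}"
  then have p: "\<tau> permutes {1..s}" by simp
  have "{1..s} \<subseteq> {1..Suc s}" by auto
  then have "\<tau> permutes {1..Suc s}" by (rule permutes_subset[OF p])
  moreover have "\<tau> (Suc s) = Suc s" using p by (simp add: permutes_not_in)
  ultimately show "\<tau> \<in> {\<tau>. \<tau> permutes {1..Suc s} \<and> \<tau> (Suc s) = Suc s}" by simp
qed

lemma W_Suc: "W (Suc s) z = W s z * (\<Prod>v\<in>{1..s}. z (Suc s) - z v)"
proof (cases "inj_on z {1..s}")
  case False
  then obtain a b where ab: "a \<in> {1..s}" "b \<in> {1..s}" "a \<noteq> b" "z a = z b"
    unfolding inj_on_def by blast
  have "W s z = 0" by (rule W_rep[OF ab])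
  moreover have "W (Suc s) z = 0" by (rule W_rep[of a _ b]) (use ab in auto)
  ultimately show ?thesis by simp
next
  case True
  define P :: "int poly" where "P = (\<Sum>\<tau>\<in>{\<tau>. \<tau> permutes {1..Suc s}}.
      monom (sign \<tau> * (\<Prod>l\<in>{1..s}. z l ^ (\<tau> l - 1))) (\<tau> (Suc s) - 1))"
  define Q :: "int poly" where "Q = smult (W s z) (\<Prod>v\<in>{1..s}. [:- z v, 1:])"
  have fin: "finite {\<tau>. \<tau> permutes {1..Suc s}}" by (simp add: finite_permutations)
  have evalP: "poly P x = W (Suc s) (z(Suc s := x))" for x
    unfolding P_def W_def poly_sum poly_monom
  proof (rule sum.cong[OF refl])
    fix \<tau> assume "\<tau> \<in> {\<tau>. \<tau> permutes {1..Suc s}}"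
    have "(\<Prod>l\<in>{1..s}. (z(Suc s := x)) l ^ (\<tau> l - 1)) = (\<Prod>l\<in>{1..s}. z l ^ (\<tau> l - 1))"
      by (rule prod.cong) auto
    then show "sign \<tau> * (\<Prod>l = 1..s. z l ^ (\<tau> l - 1)) * x ^ (\<tau> (Suc s) - 1) =
         sign \<tau> * (\<Prod>l = 1..Suc s. (z(Suc s := x)) l ^ (\<tau> l - 1))"
      by (simp add: prod.cl_ivl_Suc)
  qed
  have degP: "degree P \<le> s"
    unfolding P_def
  proof (rule degree_sum_le[OF fin])
    fix \<tau> assume "\<tau> \<in> {\<tau>. \<tau> permutes {1..Suc s}}"
    then have "\<tau> (Suc s) \<in> {1..Suc s}" using permutes_in_image[of \<tau> "{1..Suc s}" "Suc s"] by simp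
    then show "degree (monom (sign \<tau> * (\<Prod>l = 1..s. z l ^ (\<tau> l - 1))) (\<tau> (Suc s) - 1)) \<le> s"
      by (intro order.trans[OF degree_monom_le]) auto
  qed
  have coeffP: "coeff P s = W s z"
  proof -
    have "coeff P s = (\<Sum>\<tau>\<in>{\<tau>. \<tau> permutes {1..Suc s}}.
       if \<tau> (Suc s) = Suc s then sign \<tau> * (\<Prod>l\<in>{1..s}. z l ^ (\<tau> l - 1)) else 0)"
      unfolding P_def coeff_sum coeff_monom
    proof (rule sum.cong[OF refl])
      fix \<tau> assume "\<tau> \<in> {\<tau>. \<tau> permutes {1..Suc s}}"
      then have "\<tau> (Suc s) \<in> {1..Suc s}" using permutes_in_image[of \<tau> "{1..Suc s}" "Suc s"] by simp
      then have "(\<tau> (Suc s) - 1 = s) = (\<tau> (Suc s) = Suc s)" by auto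
      then show "(if \<tau> (Suc s) - 1 = s then sign \<tau> * (\<Prod>l = 1..s. z l ^ (\<tau> l - 1)) else 0) =
          (if \<tau> (Suc s) = Suc s then sign \<tau> * (\<Prod>l = 1..s. z l ^ (\<tau> l - 1)) else 0)" by simp
    qed
    also have "\<dots> = (\<Sum>\<tau>\<in>{\<tau>\<in>{\<tau>. \<tau> permutes {1..Suc s}}. \<tau> (Suc s) = Suc s}.
        sign \<tau> * (\<Prod>l\<in>{1..s}. z l ^ (\<tau> l - 1)))"
      by (rule sum.inter_filter[OF fin, symmetric])
    also have "{\<tau>\<in>{\<tau>. \<tau> permutes {1..Suc s}}. \<tau> (Suc s) = Suc s} = {\<tau>. \<tau> permutes {1..s}}"
      using perm_fix_Suc by auto
    also have "(\<Sum>\<tau>\<in>{\<tau>. \<tau> permutes {1..s}}. sign \<tau> * (\<Prod>l\<in>{1..s}. z l ^ (\<tau> l - 1))) = W s z"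
      unfolding W_def ..
    finally show ?thesis .
  qed
  have nz: "\<And>v. [:- z v, 1:] \<noteq> 0" by simp
  have degprod: "degree (\<Prod>v\<in>{1..s}. [:- z v, 1:]) = s"
    by (subst degree_prod_sum_eq) (auto)
  have lcprod: "lead_coeff (\<Prod>v\<in>{1..s}. [:- z v, 1:]) = 1"
    by (simp add: lead_coeff_prod)
  have degQ: "degree Q \<le> s" unfolding Q_def using degree_smult_le[of "W s z" "\<Prod>v\<in>{1..s}. [:- z v, 1:]"] degprod by simp
  have coeffQ: "coeff Q s = W s z" unfolding Q_def using lcprod degprod by simp
  define R where "R = P - Q"
  have degR: "degree R \<le> s" unfolding R_def by (rule degree_diff_le[OF degP degQ])
  have coeffR: "coeff R s = 0" unfolding R_def using coeffP coeffQ by simp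
  have roots: "z ` {1..s} \<subseteq> {x. poly R x = 0}"
  proof (rule subsetI)
    fix y assume "y \<in> z ` {1..s}"
    then obtain j where j: "1 \<le> j" "j \<le> s" and yj: "y = z j" by auto
    have "poly P (z j) = 0" unfolding evalP by (rule W_rep[of j _ "Suc s"]) (use j in auto)
    moreover have "poly Q (z j) = 0" unfolding Q_def poly_smult poly_prod
      using j by (auto intro!: prod_zero)
    ultimately show "y \<in> {x. poly R x = 0}" unfolding R_def yj by simp
  qed
  have "R = 0"
  proof (rule ccontr)
    assume R0: "R \<noteq> 0"
    then have "lead_coeff R \<noteq> 0" by simp
    then have "degree R \<noteq> s" using coeffR by auto
    then have dl: "degree R < s" using degR by simp
    have "card (z ` {1..s}) \<le> card {x. poly R x = 0}"
      by (rule card_mono[OF poly_roots_finite[OF R0] roots])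
    also have "\<dots> \<le> degree R" by (rule card_poly_roots_bound[OF R0])
    finally show False using dl card_image[OF True] by simp
  qed
  then have "P = Q" unfolding R_def by simp
  have "W (Suc s) z = poly P (z (Suc s))" using evalP[of "z (Suc s)"] by simp
  also have "\<dots> = poly Q (z (Suc s))" using \<open>P = Q\<close> by simp
  also have "\<dots> = W s z * (\<Prod>v\<in>{1..s}. z (Suc s) - z v)" unfolding Q_def by (simp add: poly_prod)
  finally show ?thesis .
qed

lemma Delta_W: "Delta s z = W s z"
proof (induction s)
  case 0
  then show ?case by (simp add: Delta_def W_def permutes_empty)
next
  case (Suc s)
  have "Delta (Suc s) z = Delta s z * (\<Prod>v\<in>{1..s}. z (Suc s) - z v)"
    unfolding Delta_def by (simp add: prod.cl_ivl_Suc atLeastLessThanSuc_atLeastAtMost)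
  then show ?case using Suc W_Suc by simp
qed



definition Aphi :: "(nat \<Rightarrow> int) \<Rightarrow> nat \<Rightarrow> (nat \<Rightarrow> nat) \<Rightarrow> int" where
  "Aphi d s \<phi> = (\<Sum>\<sigma>\<in>{\<sigma>. \<sigma> permutes {1..s}}. sign \<sigma> * (\<Prod>l\<in>{1..s}. d (inv \<sigma> l) ^ \<phi> l))"

lemma A_noninj:
  assumes "\<not> inj_on \<phi> {1..s}"
  shows "Aphi d s \<phi> = 0"
proof -
  from assms obtain a b where ab: "a \<in> {1..s}" "b \<in> {1..s}" "a \<noteq> b" "\<phi> a = \<phi> b"
    unfolding inj_on_def by blast
  let ?t = "Transposition.transpose a b"
  show ?thesis unfolding Aphi_def
  proof (rule alt_zero_left[OF _ ab(1-3)])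
    fix \<rho> :: "nat \<Rightarrow> nat" assume p: "\<rho> permutes {1..s}"
    have tmem: "\<And>l. l \<in> {1..s} \<Longrightarrow> ?t l \<in> {1..s}"
      using ab(1,2) by (auto simp: transpose_def)
    have "inv (?t \<circ> \<rho>) = inv \<rho> \<circ> ?t"
      using p by (simp add: o_inv_distrib permutes_bij inv_transpose_eq)
    then have "(\<Prod>l\<in>{1..s}. d (inv (?t \<circ> \<rho>) l) ^ \<phi> l) = (\<Prod>l\<in>{1..s}. d (inv \<rho> (?t l)) ^ \<phi> l)"
      by simp
    also have "\<dots> = (\<Prod>l\<in>{1..s}. d (inv \<rho> l) ^ \<phi> (?t l))"
      using ab
      by (intro prod.reindex_bij_witness[where i="?t" and j="?t"])
        (simp_all add: tmem tmem[unfolded One_nat_def] del: atLeastAtMost_iff)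
    also have "\<dots> = (\<Prod>l\<in>{1..s}. d (inv \<rho> l) ^ \<phi> l)"
    proof (intro prod.cong refl)
      fix l show "d (inv \<rho> l) ^ \<phi> (?t l) = d (inv \<rho> l) ^ \<phi> l"
        using ab(4) by (cases "l = a"; cases "l = b") (simp_all add: transpose_def)
    qed
    finally show "(\<Prod>l\<in>{1..s}. d (inv (?t \<circ> \<rho>) l) ^ \<phi> l) = (\<Prod>l\<in>{1..s}. d (inv \<rho> l) ^ \<phi> l)" .
  qed simp
qed

lemma sum_inj_range:
  fixes g :: "nat \<Rightarrow> nat"
  assumes "finite S" "inj_on g S" "g ` S \<subseteq> {..<card S}"
  shows "sum g S = (\<Sum>k<card S. k)"
proof -
  have "card (g ` S) = card S" by (rule card_image[OF assms(2)])
  then have "g ` S = {..<card S}"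
    by (intro card_subset_eq) (simp_all add: assms(3))
  then have "(\<Sum>k<card S. k) = sum id (g ` S)" by simp
  also have "\<dots> = sum g S" using assms(2) by (simp add: sum.reindex)
  finally show ?thesis by simp
qed

lemma inj_forces:
  fixes \<tau> \<phi> :: "nat \<Rightarrow> nat" and s :: nat
  assumes tau: "\<tau> permutes {1..s}"
    and phi: "\<And>l. l \<in> {1..s} \<Longrightarrow> \<phi> l \<le> \<tau> l - 1"
    and inj: "inj_on \<phi> {1..s}"
  shows "\<forall>l\<in>{1..s}. \<phi> l = \<tau> l - 1"
proof -
  have tin: "\<And>l. l \<in> {1..s} \<Longrightarrow> \<tau> l \<in> {1..s}" by (metis permutes_in_image[OF tau])
  have c: "card {1..s} = s" by simp
  have s1: "sum \<phi> {1..s} = (\<Sum>k<s. k)"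
  proof -
    have "\<phi> ` {1..s} \<subseteq> {..<card {1..s}}"
    proof
      fix y assume "y \<in> \<phi> ` {1..s}"
      then obtain l where l: "l \<in> {1..s}" "y = \<phi> l" by auto
      show "y \<in> {..<card {1..s}}" using phi[OF l(1)] tin[OF l(1)] l(2) by auto
    qed
    then show ?thesis using sum_inj_range[OF _ inj] by simp
  qed
  have s2: "(\<Sum>l\<in>{1..s}. \<tau> l - 1) = (\<Sum>k<s. k)"
  proof -
    have ij: "inj_on (\<lambda>l. \<tau> l - 1) {1..s}"
    proof (rule inj_onI)
      fix x y assume xy: "x \<in> {1..s}" "y \<in> {1..s}" "\<tau> x - 1 = \<tau> y - 1"
      then have "\<tau> x = \<tau> y" using tin[OF xy(1)] tin[OF xy(2)] by auto
      then show "x = y" using permutes_inj[OF tau] by (metis injD)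
    qed
    have "(\<lambda>l. \<tau> l - 1) ` {1..s} \<subseteq> {..<card {1..s}}"
    proof
      fix y assume "y \<in> (\<lambda>l. \<tau> l - 1) ` {1..s}"
      then obtain l where l: "l \<in> {1..s}" "y = \<tau> l - 1" by auto
      show "y \<in> {..<card {1..s}}" using tin[OF l(1)] l(2) by auto
    qed
    then show ?thesis using sum_inj_range[OF _ ij] by simp
  qed
  have "(\<Sum>l\<in>{1..s}. (\<tau> l - 1) - \<phi> l) = (\<Sum>l\<in>{1..s}. \<tau> l - 1) - sum \<phi> {1..s}"
    by (rule sum_subtractf_nat) (use phi in auto)
  also have "\<dots> = 0" using s1 s2 by simp
  finally have "\<forall>l\<in>{1..s}. (\<tau> l - 1) - \<phi> l = 0" by simp
  then show ?thesis using phi by fastforce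
qed



lemma K0:
  fixes d \<beta> :: "nat \<Rightarrow> int" and s :: nat
  shows "(\<Sum>\<sigma>\<in>{\<sigma>. \<sigma> permutes {1..s}}. sign \<sigma> * Delta s (\<lambda>l. d (inv \<sigma> l) - \<beta> l))
       = (\<Sum>\<tau>\<in>{\<tau>. \<tau> permutes {1..s}}. sign \<tau> * Aphi d s (\<lambda>l. \<tau> l - 1))"
proof -
  let ?P = "{\<sigma>::nat\<Rightarrow>nat. \<sigma> permutes {1..s}}"
  define c where "c \<tau> \<phi> = (\<Prod>l\<in>{1..s}. of_nat ((\<tau> l - 1) choose \<phi> l) * (- \<beta> l) ^ (\<tau> l - 1 - \<phi> l))"
    for \<tau> \<phi> :: "nat \<Rightarrow> nat"
  define e where "e \<sigma> \<phi> = (\<Prod>l\<in>{1..s}. d (inv \<sigma> l) ^ \<phi> l)" for \<sigma> \<phi> :: "nat \<Rightarrow> nat"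
  define PE where "PE \<tau> = PiE {1..s} (\<lambda>l. {..\<tau> l - 1})" for \<tau> :: "nat \<Rightarrow> nat"
  have finPE: "finite (PE \<tau>)" for \<tau> unfolding PE_def by (simp add: finite_PiE)
  have step1: "Delta s (\<lambda>l. d (inv \<sigma> l) - \<beta> l) = (\<Sum>\<tau>\<in>?P. sign \<tau> * (\<Sum>\<phi>\<in>PE \<tau>. c \<tau> \<phi> * e \<sigma> \<phi>))"
    for \<sigma> :: "nat \<Rightarrow> nat"
  proof -
    have "Delta s (\<lambda>l. d (inv \<sigma> l) - \<beta> l)
        = (\<Sum>\<tau>\<in>?P. sign \<tau> * (\<Prod>l\<in>{1..s}. (d (inv \<sigma> l) - \<beta> l) ^ (\<tau> l - 1)))"
      by (simp add: Delta_W W_def)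
    also have "\<dots> = (\<Sum>\<tau>\<in>?P. sign \<tau> * (\<Sum>\<phi>\<in>PE \<tau>. c \<tau> \<phi> * e \<sigma> \<phi>))"
    proof (rule sum.cong[OF refl])
      fix \<tau> :: "nat \<Rightarrow> nat"
      have bin: "(x - y) ^ n = (\<Sum>i\<in>{..n}. of_nat (n choose i) * x ^ i * (- y) ^ (n - i))"
        for x y :: int and n
      proof -
        have "(x - y) ^ n = (x + (- y)) ^ n" by simp
        also have "\<dots> = (\<Sum>i\<in>{..n}. of_nat (n choose i) * x ^ i * (- y) ^ (n - i))"
          by (rule binomial_ring)
        finally show ?thesis .
      qed
      have "(\<Prod>l\<in>{1..s}. (d (inv \<sigma> l) - \<beta> l) ^ (\<tau> l - 1))
          = (\<Prod>l\<in>{1..s}. \<Sum>i\<in>{..\<tau> l - 1}. of_nat ((\<tau> l - 1) choose i) * d (inv \<sigma> l) ^ i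
                * (- \<beta> l) ^ (\<tau> l - 1 - i))"
        by (rule prod.cong[OF refl]) (rule bin)
      also have "\<dots> = (\<Sum>\<phi>\<in>PE \<tau>. \<Prod>l\<in>{1..s}. of_nat ((\<tau> l - 1) choose \<phi> l) * d (inv \<sigma> l) ^ \<phi> l
                * (- \<beta> l) ^ (\<tau> l - 1 - \<phi> l))"
        unfolding PE_def by (rule prod_sum_PiE) auto
      also have "\<dots> = (\<Sum>\<phi>\<in>PE \<tau>. c \<tau> \<phi> * e \<sigma> \<phi>)"
        unfolding c_def e_def by (rule sum.cong[OF refl]) (simp add: prod.distrib[symmetric] mult_ac)
      finally show "sign \<tau> * (\<Prod>l\<in>{1..s}. (d (inv \<sigma> l) - \<beta> l) ^ (\<tau> l - 1))
          = sign \<tau> * (\<Sum>\<phi>\<in>PE \<tau>. c \<tau> \<phi> * e \<sigma> \<phi>)" by simp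
    qed
    finally show ?thesis .
  qed
  have "(\<Sum>\<sigma>\<in>?P. sign \<sigma> * Delta s (\<lambda>l. d (inv \<sigma> l) - \<beta> l))
      = (\<Sum>\<sigma>\<in>?P. \<Sum>\<tau>\<in>?P. \<Sum>\<phi>\<in>PE \<tau>. sign \<tau> * c \<tau> \<phi> * (sign \<sigma> * e \<sigma> \<phi>))"
    by (simp add: step1 sum_distrib_left mult_ac)
  also have "\<dots> = (\<Sum>\<tau>\<in>?P. \<Sum>\<sigma>\<in>?P. \<Sum>\<phi>\<in>PE \<tau>. sign \<tau> * c \<tau> \<phi> * (sign \<sigma> * e \<sigma> \<phi>))"
    by (rule sum.swap)
  also have "\<dots> = (\<Sum>\<tau>\<in>?P. \<Sum>\<phi>\<in>PE \<tau>. \<Sum>\<sigma>\<in>?P. sign \<tau> * c \<tau> \<phi> * (sign \<sigma> * e \<sigma> \<phi>))"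
    by (rule sum.cong[OF refl], rule sum.swap)
  also have "\<dots> = (\<Sum>\<tau>\<in>?P. \<Sum>\<phi>\<in>PE \<tau>. sign \<tau> * c \<tau> \<phi> * Aphi d s \<phi>)"
    by (simp add: Aphi_def e_def sum_distrib_left)
  also have "\<dots> = (\<Sum>\<tau>\<in>?P. sign \<tau> * Aphi d s (\<lambda>l. \<tau> l - 1))"
  proof (rule sum.cong[OF refl])
    fix \<tau> assume "\<tau> \<in> ?P"
    then have tau: "\<tau> permutes {1..s}" by simp
    define t where "t = restrict (\<lambda>l. \<tau> l - 1) {1..s}"
    have tPE: "t \<in> PE \<tau>" unfolding t_def PE_def by auto
    have z: "\<forall>\<phi>\<in>PE \<tau> - {t}. sign \<tau> * c \<tau> \<phi> * Aphi d s \<phi> = 0"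
    proof
      fix \<phi> assume "\<phi> \<in> PE \<tau> - {t}"
      then have phiPE: "\<phi> \<in> PE \<tau>" and ne: "\<phi> \<noteq> t" by auto
      have "\<not> inj_on \<phi> {1..s}"
      proof
        assume inj: "inj_on \<phi> {1..s}"
        have le: "\<And>l. l \<in> {1..s} \<Longrightarrow> \<phi> l \<le> \<tau> l - 1" using phiPE unfolding PE_def by auto
        have eq: "\<forall>l\<in>{1..s}. \<phi> l = \<tau> l - 1" by (rule inj_forces[OF tau le inj])
        have "\<phi> = t"
        proof
          fix l show "\<phi> l = t l"
          proof (cases "l \<in> {1..s}")
            case True then show ?thesis using eq by (simp add: t_def)
          next
            case False then show ?thesis using phiPE unfolding PE_def t_def
              by (auto simp: PiE_def extensional_def)
          qed
        qed
        with ne show False by simp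
      qed
      then show "sign \<tau> * c \<tau> \<phi> * Aphi d s \<phi> = 0" by (simp add: A_noninj)
    qed
    have "(\<Sum>\<phi>\<in>PE \<tau>. sign \<tau> * c \<tau> \<phi> * Aphi d s \<phi>) = (\<Sum>\<phi>\<in>{t}. sign \<tau> * c \<tau> \<phi> * Aphi d s \<phi>)"
      by (rule sum.mono_neutral_right[OF finPE]) (use tPE z in auto)
    also have "\<dots> = sign \<tau> * c \<tau> t * Aphi d s t" by simp
    also have "c \<tau> t = 1" unfolding c_def t_def by (rule prod.neutral) simp
    also have "Aphi d s t = Aphi d s (\<lambda>l. \<tau> l - 1)"
    proof -
      have "\<And>\<sigma>. (\<Prod>l\<in>{1..s}. d (inv \<sigma> l) ^ t l) = (\<Prod>l\<in>{1..s}. d (inv \<sigma> l) ^ (\<tau> l - 1))"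
        by (rule prod.cong[OF refl]) (simp add: t_def)
      then show ?thesis unfolding Aphi_def by simp
    qed
    finally show "(\<Sum>\<phi>\<in>PE \<tau>. sign \<tau> * c \<tau> \<phi> * Aphi d s \<phi>) = sign \<tau> * Aphi d s (\<lambda>l. \<tau> l - 1)"
      by simp
  qed
  finally show ?thesis .
qed

lemma E:
  fixes P :: "nat set"
  assumes "finite P" "u < card P"
  shows "(\<Sum>M\<in>Pow P. (-1::int) ^ card M * int (card M) ^ u) = 0"
  using assms
proof (induction P arbitrary: u rule: finite_induct)
  case empty then show ?case by simp
next
  case (insert a P)
  let ?f = "\<lambda>u M. (-1::int) ^ card M * int (card M) ^ u"
  have bin: "(x + 1) ^ u = x ^ u + (\<Sum>j<u. of_nat (u choose j) * x ^ j)" for x :: int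
  proof -
    have "(x + 1) ^ u = (\<Sum>k\<le>u. of_nat (u choose k) * x ^ k * 1 ^ (u - k))" by (rule binomial_ring)
    also have "\<dots> = (\<Sum>k<Suc u. of_nat (u choose k) * x ^ k)" by (simp add: lessThan_Suc_atMost)
    also have "\<dots> = x ^ u + (\<Sum>j<u. of_nat (u choose j) * x ^ j)" by simp
    finally show ?thesis .
  qed
  have disj: "Pow P \<inter> insert a ` Pow P = {}" using insert(2) by auto
  have inj: "inj_on (insert a) (Pow P)"
  proof (rule inj_onI)
    fix M N assume "M \<in> Pow P" "N \<in> Pow P" "insert a M = insert a N"
    then have "a \<notin> M" "a \<notin> N" "insert a M = insert a N" using insert(2) by auto
    then show "M = N" by (metis Diff_insert_absorb)
  qed
  have "(\<Sum>M\<in>Pow (insert a P). ?f u M) = (\<Sum>M\<in>Pow P. ?f u M) + (\<Sum>M\<in>insert a ` Pow P. ?f u M)"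
    unfolding Pow_insert by (rule sum.union_disjoint) (use insert(1) disj in auto)
  also have "(\<Sum>M\<in>insert a ` Pow P. ?f u M) = (\<Sum>M\<in>Pow P. ?f u (insert a M))"
    by (simp add: sum.reindex[OF inj])
  also have "\<dots> = (\<Sum>M\<in>Pow P. - ?f u M - (\<Sum>j<u. of_nat (u choose j) * ?f j M))"
  proof (rule sum.cong[OF refl])
    fix M assume "M \<in> Pow P"
    then have "finite M" "a \<notin> M" using insert(1,2) finite_subset by auto
    then have cM: "card (insert a M) = Suc (card M)" by simp
    let ?x = "int (card M)"
    have "?f u (insert a M) = - ((-1) ^ card M * (?x + 1) ^ u)" by (simp add: cM add.commute)
    also have "\<dots> = - ((-1) ^ card M * (?x ^ u + (\<Sum>j<u. of_nat (u choose j) * ?x ^ j)))"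
      by (simp only: bin)
    also have "\<dots> = - ?f u M - (-1) ^ card M * (\<Sum>j<u. of_nat (u choose j) * ?x ^ j)"
      by (simp add: algebra_simps)
    also have "(-1) ^ card M * (\<Sum>j<u. of_nat (u choose j) * ?x ^ j) = (\<Sum>j<u. of_nat (u choose j) * ?f j M)"
      by (simp add: sum_distrib_left mult_ac)
    finally show "?f u (insert a M) = - ?f u M - (\<Sum>j<u. of_nat (u choose j) * ?f j M)" .
  qed
  also have "\<dots> = - (\<Sum>M\<in>Pow P. ?f u M) - (\<Sum>j<u. of_nat (u choose j) * (\<Sum>M\<in>Pow P. ?f j M))"
    by (simp add: sum_subtractf sum_negf sum_distrib_left sum.swap[of _ "{..<u}"])
  also have "(\<Sum>j<u. of_nat (u choose j) * (\<Sum>M\<in>Pow P. ?f j M)) = 0"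
  proof (rule sum.neutral, rule ballI)
    fix j assume "j \<in> {..<u}"
    then have "j < card P" using insert by simp
    then show "of_nat (u choose j) * (\<Sum>M\<in>Pow P. ?f j M) = 0" using insert.IH by simp
  qed
  finally show ?case by simp
qed


theorem lemma6p3:
  fixes s u :: nat and \<Gamma> \<alpha> :: "nat \<Rightarrow> int" and Pi_set :: "nat set"
  assumes "s \<ge> 1"
    and "Pi_set \<subseteq> {1..s}"
    and "card Pi_set > u"
  shows "(\<Sum>\<sigma>\<in>{\<sigma>. \<sigma> permutes {1..s}}. \<Sum>M\<in>Pow Pi_set.
            (-1) ^ card M * sign \<sigma>
            * Delta s (\<lambda>l. perm_act_shift \<alpha> \<sigma> \<Gamma> l - ind_vec M l)
            * (int (card M)) ^ u) = 0"
proof -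
  let ?P = "{\<sigma>::nat\<Rightarrow>nat. \<sigma> permutes {1..s}}"
  define \<Phi> where "\<Phi> = (\<Sum>\<tau>\<in>?P. sign \<tau> * Aphi (\<lambda>i. \<Gamma> i + \<alpha> i) s (\<lambda>l. \<tau> l - 1))"
  have fin: "finite Pi_set" using assms(2) finite_subset by blast
  have inner: "(\<Sum>\<sigma>\<in>?P. sign \<sigma> * Delta s (\<lambda>l. perm_act_shift \<alpha> \<sigma> \<Gamma> l - ind_vec M l)) = \<Phi>" for M
  proof -
    have "\<And>\<sigma>. (\<lambda>l. perm_act_shift \<alpha> \<sigma> \<Gamma> l - ind_vec M l)
        = (\<lambda>l. (\<lambda>i. \<Gamma> i + \<alpha> i) (inv \<sigma> l) - (\<alpha> l + ind_vec M l))"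
      by (simp add: perm_act_shift_def perm_act_def fun_eq_iff)
    then show ?thesis using K0[where d="\<lambda>i. \<Gamma> i + \<alpha> i" and s=s and \<beta>="\<lambda>l. \<alpha> l + ind_vec M l"]
      unfolding \<Phi>_def by simp
  qed
  have "(\<Sum>\<sigma>\<in>?P. \<Sum>M\<in>Pow Pi_set. (-1) ^ card M * sign \<sigma>
            * Delta s (\<lambda>l. perm_act_shift \<alpha> \<sigma> \<Gamma> l - ind_vec M l) * (int (card M)) ^ u)
      = (\<Sum>M\<in>Pow Pi_set. \<Sum>\<sigma>\<in>?P. (-1) ^ card M * sign \<sigma>
            * Delta s (\<lambda>l. perm_act_shift \<alpha> \<sigma> \<Gamma> l - ind_vec M l) * (int (card M)) ^ u)"
    by (rule sum.swap)
  also have "\<dots> = (\<Sum>M\<in>Pow Pi_set. ((-1) ^ card M * int (card M) ^ u)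
        * (\<Sum>\<sigma>\<in>?P. sign \<sigma> * Delta s (\<lambda>l. perm_act_shift \<alpha> \<sigma> \<Gamma> l - ind_vec M l)))"
    by (simp add: sum_distrib_left mult_ac)
  also have "\<dots> = (\<Sum>M\<in>Pow Pi_set. ((-1) ^ card M * int (card M) ^ u) * \<Phi>)"
    by (rule sum.cong[OF refl], subst inner, rule refl)
  also have "\<dots> = (\<Sum>M\<in>Pow Pi_set. (-1) ^ card M * int (card M) ^ u) * \<Phi>"
    by (simp add: sum_distrib_right)
  also have "\<dots> = 0" using E[OF fin assms(3)] by simp
  finally show ?thesis .
qed

end
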